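(* Let $p\in\mathcal{X}$ be a pathless polynomial with $p\in\mathcal{J}$. Then $D(p)=0$.
   Context: Let $\mathbf{k}$ be a commutative ring, let $\beta,\alpha\in\mathbf{k}$, and let $n$ be a positive integer. Let $\mathcal{X}=\mathbf{k}[x_{i,j}\mid 1\le i<j\le n]$ be the polynomial ring over $\mathbf{k}$ in the indeterminates $x_{i,j}$. Let $\mathcal{J}$ be the ideal of $\mathcal{X}$ generated by all elements $x_{i,j}x_{j,k}-x_{i,k}(x_{i,j}+x_{j,k}+\beta)-\alpha$ for $1\le i<j<k\le n$. A monomial in the $x_{i,j}$ is pathless if there is no triple $1\le i<j<k\le n$ with $x_{i,j}x_{j,k}$ dividing it; a polynomial is pathless if it is a $\mathbf{k}$-linear combination of pathless monomials. Let $\mathcal{T}'=\mathbf{k}[t_1,\dots,t_{n-1}]$ and let $D:\mathcal{X}\to\mathcal{T}'$ be the $\mathbf{k}$-algebra homomorphism with $D(x_{i,j})=t_i$. *)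

theory Defs
  imports "HOL-Library.Poly_Mapping"
begin

text \<open>Variables of the ring X are indexed by
pairs (i,j) (standing for x_{i,j}); variables of T' by naturals i (standing for t_i).\<close>

type_synonym 'a xpoly = "((nat \<times> nat) \<Rightarrow>\<^sub>0 nat) \<Rightarrow>\<^sub>0 'a"
type_synonym 'a tpoly = "(nat \<Rightarrow>\<^sub>0 nat) \<Rightarrow>\<^sub>0 'a"

definition xvar :: "nat \<Rightarrow> nat \<Rightarrow> 'a::comm_ring_1 xpoly" where
  "xvar i j = Poly_Mapping.single (Poly_Mapping.single (i, j) 1) 1"

definition tvar :: "nat \<Rightarrow> 'a::comm_ring_1 tpoly" where
  "tvar i = Poly_Mapping.single (Poly_Mapping.single i 1) 1"

definition xconst :: "'a::comm_ring_1 \<Rightarrow> 'a xpoly" where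
  "xconst c = Poly_Mapping.single 0 c"

definition tconst :: "'a::comm_ring_1 \<Rightarrow> 'a tpoly" where
  "tconst c = Poly_Mapping.single 0 c"

definition Xring :: "nat \<Rightarrow> 'a::comm_ring_1 xpoly set" where
  "Xring n = {p. \<forall>m \<in> Poly_Mapping.keys p. \<forall>v \<in> Poly_Mapping.keys m. 1 \<le> fst v \<and> fst v < snd v \<and> snd v \<le> n}"

definition Jgen :: "'a::comm_ring_1 \<Rightarrow> 'a \<Rightarrow> nat \<Rightarrow> nat \<Rightarrow> nat \<Rightarrow> 'a xpoly" where
  "Jgen \<beta> \<alpha> i j k = xvar i j * xvar j k
      - xvar i k * (xvar i j + xvar j k + xconst \<beta>) - xconst \<alpha>"

inductive_set Jideal :: "nat \<Rightarrow> 'a::comm_ring_1 \<Rightarrow> 'a \<Rightarrow> 'a xpoly set"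
  for n :: nat and \<beta> \<alpha> :: 'a where
  gen: "1 \<le> i \<Longrightarrow> i < j \<Longrightarrow> j < k \<Longrightarrow> k \<le> n \<Longrightarrow> Jgen \<beta> \<alpha> i j k \<in> Jideal n \<beta> \<alpha>"
| zero: "0 \<in> Jideal n \<beta> \<alpha>"
| add: "p \<in> Jideal n \<beta> \<alpha> \<Longrightarrow> q \<in> Jideal n \<beta> \<alpha> \<Longrightarrow> p + q \<in> Jideal n \<beta> \<alpha>"
| mult: "q \<in> Xring n \<Longrightarrow> p \<in> Jideal n \<beta> \<alpha> \<Longrightarrow> q * p \<in> Jideal n \<beta> \<alpha>"

definition pathless_monomial :: "nat \<Rightarrow> ((nat \<times> nat) \<Rightarrow>\<^sub>0 nat) \<Rightarrow> bool" where
  "pathless_monomial n m \<longleftrightarrow>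
     \<not> (\<exists>i j k. 1 \<le> i \<and> i < j \<and> j < k \<and> k \<le> n \<and>
              Poly_Mapping.lookup m (i, j) \<ge> 1 \<and> Poly_Mapping.lookup m (j, k) \<ge> 1)"

definition pathless :: "nat \<Rightarrow> 'a::comm_ring_1 xpoly \<Rightarrow> bool" where
  "pathless n p \<longleftrightarrow> (\<forall>m \<in> Poly_Mapping.keys p. pathless_monomial n m)"

text \<open>The k-algebra homomorphism D : X -> T' with D(x_{i,j}) = t_i.\<close>
definition Dmap :: "'a::comm_ring_1 xpoly \<Rightarrow> 'a tpoly" where
  "Dmap p = (\<Sum>m \<in> Poly_Mapping.keys p. tconst (Poly_Mapping.lookup p m) *
                (\<Prod>v \<in> Poly_Mapping.keys m. tvar (fst v) ^ Poly_Mapping.lookup m v))"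

end

theory Submission imports Defs Main begin

section \<open>Linear extension\<close>

definition lin :: "('k \<Rightarrow> 'a::comm_ring_1 tpoly) \<Rightarrow> ('k \<Rightarrow>\<^sub>0 'a) \<Rightarrow> 'a tpoly" where
  "lin F p = (\<Sum>m\<in>Poly_Mapping.keys p. tconst (Poly_Mapping.lookup p m) * F m)"

lemma tconst_add: "tconst (a + b) = tconst a + tconst b"
  by (simp add: tconst_def single_add)
lemma tconst_mult: "tconst (a * b) = tconst a * tconst b"
  by (simp add: tconst_def mult_single)
lemma tconst_0[simp]: "tconst 0 = 0" by (simp add: tconst_def)
lemma tconst_1[simp]: "tconst 1 = 1" by (simp add: tconst_def)
lemma tconst_uminus: "tconst (- a) = - tconst a" by (simp add: tconst_def single_uminus)

lemma lin_zero[simp]: "lin F 0 = 0" by (simp add: lin_def)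

lemma lin_single[simp]: "lin F (Poly_Mapping.single m c) = tconst c * F m"
  by (cases "c = 0") (simp_all add: lin_def)

lemma lin_add: "lin F (p + q) = lin F p + lin F q"
  unfolding lin_def
  by (rule setsum_keys_plus_distrib) (simp_all add: tconst_add distrib_right)

lemma lin_uminus: "lin F (- p) = - lin F p"
proof -
  have "lin F (- p) + lin F p = 0" by (simp flip: lin_add)
  then show ?thesis by (simp add: eq_neg_iff_add_eq_0)
qed

lemma lin_diff: "lin F (p - q) = lin F p - lin F q"
  by (metis diff_conv_add_uminus lin_add lin_uminus)

lemma lin_cong: "(\<And>m. m \<in> Poly_Mapping.keys p \<Longrightarrow> F m = G m) \<Longrightarrow> lin F p = lin G p"
  by (simp add: lin_def)

lemma lin_mult_left: "c * lin F p = lin (\<lambda>m. c * F m) p"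
  by (simp add: lin_def sum_distrib_left mult.left_commute)

lemma lin_fun_add: "lin (\<lambda>m. F m + G m) p = lin F p + lin G p"
  by (simp add: lin_def sum.distrib distrib_left)

lemma lin_fun_diff: "lin (\<lambda>m. F m - G m) p = lin F p - lin G p"
  by (simp add: lin_def sum_subtractf right_diff_distrib)

lemma poly_expansion: "(p::'k \<Rightarrow>\<^sub>0 'b::comm_monoid_add) = (\<Sum>m\<in>Poly_Mapping.keys p. Poly_Mapping.single m (Poly_Mapping.lookup p m))"
proof -
  have *: "finite I \<Longrightarrow> Poly_Mapping.lookup (\<Sum>m\<in>I. Poly_Mapping.single m (Poly_Mapping.lookup p m)) k
      = (if k \<in> I then Poly_Mapping.lookup p k else 0)" for I k
    by (induction I rule: finite_induct) (auto simp: lookup_single lookup_add when_def)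
  show ?thesis
    by (rule poly_mapping_eqI) (simp add: * in_keys_iff)
qed

lemma poly_induct[case_names zero single add]:
  fixes p :: "'k \<Rightarrow>\<^sub>0 'b::comm_monoid_add"
  assumes "P 0" and "\<And>m c. P (Poly_Mapping.single m c)" and "\<And>p q. P p \<Longrightarrow> P q \<Longrightarrow> P (p + q)"
  shows "P p"
proof -
  have "P (\<Sum>m\<in>I. Poly_Mapping.single m (Poly_Mapping.lookup p m))" if "finite I" for I
    using that by (induction I rule: finite_induct) (simp_all add: assms)
  then show ?thesis by (subst poly_expansion) simp
qed

lemma lin_id: "lin (\<lambda>e. Poly_Mapping.single e 1) p = p"
  by (induction p rule: poly_induct) (simp_all add: lin_add tconst_def mult_single)

lemma lin_mult:
  assumes "\<And>x y. F (x + y) = F x * F y"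
  shows "lin F (p * q) = lin F p * lin F q"
proof (induction p rule: poly_induct)
  case (single m c)
  show ?case
  proof (induction q rule: poly_induct)
    case (single m' c')
    then show ?case by (simp add: mult_single assms tconst_mult algebra_simps)
  qed (simp_all add: distrib_left lin_add)
qed (simp_all add: distrib_right lin_add)

section \<open>Cancellation\<close>

lemma lookup_single_mult_shift:
  fixes X :: "'a::comm_ring_1 tpoly"
  shows "Poly_Mapping.lookup (Poly_Mapping.single d c * X) (d + e) = c * Poly_Mapping.lookup X e"
  by (induction X rule: poly_induct) (simp_all add: mult_single lookup_single when_def distrib_left lookup_add)

lemma lookup_single_mult_zero:
  fixes X :: "'a::comm_ring_1 tpoly"
  assumes "Poly_Mapping.lookup e v < Poly_Mapping.lookup d v"
  shows "Poly_Mapping.lookup (Poly_Mapping.single d c * X) e = 0"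
proof (induction X rule: poly_induct)
  case (single m c')
  have "d + m \<noteq> e"
  proof
    assume "d + m = e"
    then have "Poly_Mapping.lookup e v = Poly_Mapping.lookup d v + Poly_Mapping.lookup m v"
      by (auto simp: lookup_add)
    with assms show False by simp
  qed
  then show ?case by (simp add: mult_single lookup_single when_def)
qed (simp_all add: distrib_left lookup_add)

lemma tvar_cancel_zero:
  fixes X :: "'a::comm_ring_1 tpoly"
  assumes ab: "a \<noteq> b" and h: "(tvar a - tvar b) * X = 0"
  shows "X = 0"
proof -
  have eq: "tvar a * X = tvar b * X" using h by (simp add: algebra_simps)
  have "\<forall>e. Poly_Mapping.lookup e b = k \<longrightarrow> Poly_Mapping.lookup X e = 0" for k
  proof (induction k)
    case 0
    show ?case
    proof (intro allI impI)
      fix e :: "nat \<Rightarrow>\<^sub>0 nat" assume e0: "Poly_Mapping.lookup e b = 0"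
      have "Poly_Mapping.lookup X e = Poly_Mapping.lookup (tvar a * X) (Poly_Mapping.single a 1 + e)"
        by (simp add: tvar_def lookup_single_mult_shift)
      also have "\<dots> = Poly_Mapping.lookup (tvar b * X) (Poly_Mapping.single a 1 + e)" using eq by simp
      also have "\<dots> = 0" unfolding tvar_def
        by (rule lookup_single_mult_zero[where v = b]) (simp add: lookup_add e0 ab lookup_single)
      finally show "Poly_Mapping.lookup X e = 0" .
    qed
  next
    case (Suc k)
    show ?case
    proof (intro allI impI)
      fix e :: "nat \<Rightarrow>\<^sub>0 nat" assume ek: "Poly_Mapping.lookup e b = Suc k"
      define e' where "e' = Poly_Mapping.update b k e"
      have ee: "e = Poly_Mapping.single b 1 + e'"
        by (rule poly_mapping_eqI) (auto simp: e'_def lookup_add lookup_update lookup_single when_def ek)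
      have "Poly_Mapping.lookup X e = Poly_Mapping.lookup (tvar a * X) (Poly_Mapping.single a 1 + e)"
        by (simp add: tvar_def lookup_single_mult_shift)
      also have "\<dots> = Poly_Mapping.lookup (tvar b * X) (Poly_Mapping.single a 1 + e)" using eq by simp
      also have "Poly_Mapping.single a 1 + e = Poly_Mapping.single b 1 + (Poly_Mapping.single a 1 + e')"
        by (simp add: ee algebra_simps)
      also have "Poly_Mapping.lookup (tvar b * X) \<dots> = Poly_Mapping.lookup X (Poly_Mapping.single a 1 + e')"
        by (simp add: tvar_def lookup_single_mult_shift)
      also have "\<dots> = 0"
        using Suc[rule_format, of "Poly_Mapping.single a 1 + e'"]
        by (simp add: lookup_add e'_def lookup_update lookup_single ab)
      finally show "Poly_Mapping.lookup X e = 0" .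
    qed
  qed
  then show ?thesis by (intro poly_mapping_eqI) simp
qed

lemma tvar_cancel:
  fixes X Y :: "'a::comm_ring_1 tpoly"
  assumes "a \<noteq> b" and "(tvar a - tvar b) * X = (tvar a - tvar b) * Y"
  shows "X = Y"
  using tvar_cancel_zero[OF assms(1), of "X - Y"] assms(2) by (simp add: algebra_simps)

section \<open>Substitution\<close>

definition subm :: "nat \<Rightarrow> nat \<Rightarrow> (nat \<Rightarrow>\<^sub>0 nat) \<Rightarrow> 'a::comm_ring_1 tpoly" where
  "subm b a e = Poly_Mapping.single (Poly_Mapping.update b 0 e) 1 * tvar a ^ Poly_Mapping.lookup e b"

definition sub :: "nat \<Rightarrow> nat \<Rightarrow> 'a::comm_ring_1 tpoly \<Rightarrow> 'a tpoly" where
  "sub b a = lin (subm b a)"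

lemma update_zero_add: "Poly_Mapping.update b 0 (e + e') = Poly_Mapping.update b 0 e + Poly_Mapping.update b 0 (e'::nat \<Rightarrow>\<^sub>0 nat)"
  by (rule poly_mapping_eqI) (simp add: lookup_update lookup_add)

lemma update_zero_zero: "Poly_Mapping.update b 0 (0::nat \<Rightarrow>\<^sub>0 nat) = 0"
  by (rule poly_mapping_eqI) (simp add: lookup_update)

lemma single_add_one: "Poly_Mapping.single (x + y) (1::'a::comm_ring_1) = Poly_Mapping.single x 1 * Poly_Mapping.single y 1"
  by (simp add: mult_single)

lemma subm_add: "subm b a (e + e') = subm b a e * subm b a e'"
  by (simp add: subm_def update_zero_add single_add_one lookup_add power_add algebra_simps)

lemma sub_add: "sub b a (p + q) = sub b a p + sub b a q"
  by (simp add: sub_def lin_add)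
lemma sub_mult: "sub b a (p * q) = sub b a p * sub b a q"
  unfolding sub_def by (rule lin_mult) (rule subm_add)
lemma sub_tconst: "sub b a (tconst c) = tconst c"
  by (simp add: sub_def tconst_def[of c] subm_def update_zero_zero)

lemma tvar_pow: "tvar b ^ k = Poly_Mapping.single (Poly_Mapping.single b k) (1::'a::comm_ring_1)"
  by (induction k) (simp_all add: tvar_def mult_single single_add[symmetric])

lemma mono_split: "Poly_Mapping.single e (1::'a::comm_ring_1) =
   Poly_Mapping.single (Poly_Mapping.update b 0 e) 1 * tvar b ^ Poly_Mapping.lookup e b"
proof -
  have "e = Poly_Mapping.update b 0 e + Poly_Mapping.single b (Poly_Mapping.lookup e b)"
    by (rule poly_mapping_eqI) (auto simp: lookup_update lookup_add lookup_single when_def)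
  then show ?thesis by (metis mult_single mult_1 tvar_pow)
qed

lemma sub_tvar: "sub b a (tvar x) = (if x = b then tvar a else tvar x)"
proof -
  have "sub b a (tvar x) = subm b a (Poly_Mapping.single x 1)"
    by (simp add: sub_def tvar_def)
  also have "\<dots> = (if x = b then tvar a else tvar x)"
  proof (cases "x = b")
    case True
    have "Poly_Mapping.update b 0 (Poly_Mapping.single b 1) = (0::nat \<Rightarrow>\<^sub>0 nat)"
      by (rule poly_mapping_eqI) (simp add: lookup_update lookup_single when_def)
    then show ?thesis using True by (simp add: subm_def)
  next
    case False
    have "Poly_Mapping.update b 0 (Poly_Mapping.single x 1) = (Poly_Mapping.single x 1::nat \<Rightarrow>\<^sub>0 nat)"
      by (rule poly_mapping_eqI) (auto simp: lookup_update lookup_single when_def False)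
    then show ?thesis using False by (simp add: subm_def tvar_def lookup_single when_def)
  qed
  finally show ?thesis .
qed

definition hom :: "('a::comm_ring_1 tpoly \<Rightarrow> 'a tpoly) \<Rightarrow> bool" where
  "hom h \<longleftrightarrow> (\<forall>p q. h (p + q) = h p + h q) \<and> (\<forall>p q. h (p * q) = h p * h q) \<and> (\<forall>c. h (tconst c) = tconst c)"

lemma hom_sub: "hom (sub b a)"
  by (simp add: hom_def sub_add sub_mult sub_tconst)

lemma hom_comp: "hom h \<Longrightarrow> hom g \<Longrightarrow> hom (\<lambda>p. h (g p))"
  by (simp add: hom_def)

lemma hom_addD: "hom h \<Longrightarrow> h (p + q) = h p + h q" by (simp add: hom_def)
lemma hom_multD: "hom h \<Longrightarrow> h (p * q) = h p * h q" by (simp add: hom_def)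
lemma hom_tconstD: "hom h \<Longrightarrow> h (tconst c) = tconst c" by (simp add: hom_def)
lemma hom_zero: "hom h \<Longrightarrow> h 0 = 0" using hom_tconstD[of h 0] by simp
lemma hom_one: "hom h \<Longrightarrow> h 1 = 1" using hom_tconstD[of h 1] by simp
lemma hom_uminus:
  assumes h: "hom h" shows "h (- p) = - h p"
proof -
  have "h (- p) + h p = 0" using hom_addD[OF h, of "- p" p] hom_zero[OF h] by simp
  then show ?thesis by (simp add: eq_neg_iff_add_eq_0)
qed
lemma hom_diff:
  assumes h: "hom h" shows "h (p - q) = h p - h q"
  using hom_addD[OF h, of p "- q"] hom_uminus[OF h, of q] by simp
lemma hom_power: "hom h \<Longrightarrow> h (p ^ k) = h p ^ k"
  by (induction k) (simp_all add: hom_one hom_multD)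

lemma hom_eq:
  assumes h: "hom h" and g: "hom g" and v: "\<And>x. h (tvar x) = g (tvar x)"
  shows "h p = g p"
proof -
  have mono: "h (Poly_Mapping.single e 1) = g (Poly_Mapping.single e 1)" for e
  proof (induction "card (Poly_Mapping.keys e)" arbitrary: e rule: less_induct)
    case less
    show ?case
    proof (cases "Poly_Mapping.keys e = {}")
      case True
      then have "e = 0" by simp
      then show ?thesis using hom_one[OF h] hom_one[OF g] by simp
    next
      case False
      then obtain b where b: "b \<in> Poly_Mapping.keys e" by blast
      have "card (Poly_Mapping.keys (Poly_Mapping.update b 0 e)) < card (Poly_Mapping.keys e)"
        using b card_Diff1_less[OF finite_keys b] by (simp add: keys_update)
      then have IH: "h (Poly_Mapping.single (Poly_Mapping.update b 0 e) 1) = g (Poly_Mapping.single (Poly_Mapping.update b 0 e) 1)"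
        by (rule less)
      show ?thesis
        by (subst (1 2) mono_split[of e b]) (simp add: hom_multD[OF h] hom_multD[OF g] hom_power[OF h] hom_power[OF g] IH v)
    qed
  qed
  show ?thesis
  proof (induction p rule: poly_induct)
    case zero then show ?case by (simp add: hom_zero h g)
  next
    case (single m c)
    have "Poly_Mapping.single m c = tconst c * Poly_Mapping.single m 1"
      by (simp add: tconst_def mult_single)
    then show ?case by (simp add: hom_multD[OF h] hom_multD[OF g] hom_tconstD[OF h] hom_tconstD[OF g] mono)
  next
    case (add p q) then show ?case by (simp add: hom_addD[OF h] hom_addD[OF g])
  qed
qed

lemma sub_sub_comm:
  assumes "b \<noteq> d" "a \<noteq> d" "c \<noteq> b"
  shows "sub b a (sub d c G) = sub d c (sub b a G)"
  by (rule hom_eq[where h="\<lambda>p. sub b a (sub d c p)" and g="\<lambda>p. sub d c (sub b a p)", OF hom_comp[OF hom_sub hom_sub] hom_comp[OF hom_sub hom_sub]])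
     (use assms in \<open>auto simp: sub_tvar\<close>)

lemma sub_sub_absorb:
  assumes "c \<noteq> b"
  shows "sub b a (sub b c G) = sub b c G"
  by (rule hom_eq[where h="\<lambda>p. sub b a (sub b c p)" and g="sub b c", OF hom_comp[OF hom_sub hom_sub] hom_sub])
     (use assms in \<open>auto simp: sub_tvar\<close>)

lemma sub_sub_E:
  assumes "i \<noteq> j" "j \<noteq> k" "i \<noteq> k"
  shows "sub j i (sub k j G) = sub k i (sub j i G)"
  by (rule hom_eq[where h="\<lambda>p. sub j i (sub k j p)" and g="\<lambda>p. sub k i (sub j i p)", OF hom_comp[OF hom_sub hom_sub] hom_comp[OF hom_sub hom_sub]])
     (use assms in \<open>auto simp: sub_tvar\<close>)

section \<open>Divided differences\<close>

definition hsum :: "nat \<Rightarrow> nat \<Rightarrow> nat \<Rightarrow> 'a::comm_ring_1 tpoly" where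
  "hsum a b k = (\<Sum>i<k. tvar b ^ (k - Suc i) * tvar a ^ i)"

definition ddm :: "nat \<Rightarrow> nat \<Rightarrow> (nat \<Rightarrow>\<^sub>0 nat) \<Rightarrow> 'a::comm_ring_1 tpoly" where
  "ddm a b e = Poly_Mapping.single (Poly_Mapping.update b 0 e) 1 * hsum a b (Poly_Mapping.lookup e b)"

definition dd :: "nat \<Rightarrow> nat \<Rightarrow> 'a::comm_ring_1 tpoly \<Rightarrow> 'a tpoly" where
  "dd a b = lin (ddm a b)"

lemma ddm_char: "(tvar a - tvar b) * ddm a b e = subm b a e - Poly_Mapping.single e 1"
proof -
  have "(tvar a - tvar b) * hsum a b k = tvar a ^ k - tvar b ^ k" for k :: nat
    by (simp add: hsum_def power_diff_sumr2)
  then have "(tvar a - tvar b) * ddm a b e = Poly_Mapping.single (Poly_Mapping.update b 0 e) 1 *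
      (tvar a ^ Poly_Mapping.lookup e b - tvar b ^ Poly_Mapping.lookup e b)"
    by (metis ddm_def mult.left_commute)
  also have "\<dots> = subm b a e - Poly_Mapping.single e 1"
    by (simp add: subm_def right_diff_distrib flip: mono_split)
  finally show ?thesis .
qed

lemma dd_char: "(tvar a - tvar b) * dd a b G = sub b a G - G"
proof -
  have "(tvar a - tvar b) * dd a b G = lin (\<lambda>e. (tvar a - tvar b) * ddm a b e) G"
    by (simp add: dd_def lin_mult_left)
  also have "\<dots> = lin (\<lambda>e. subm b a e - Poly_Mapping.single e 1) G"
    by (simp add: ddm_char)
  also have "\<dots> = sub b a G - G"
    by (simp add: lin_fun_diff sub_def lin_id)
  finally show ?thesis .
qed

lemma dd_add: "dd a b (p + q) = dd a b p + dd a b q" by (simp add: dd_def lin_add)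
lemma dd_diff: "dd a b (p - q) = dd a b p - dd a b q" by (simp add: dd_def lin_diff)

lemma dd_mult_free:
  assumes ab: "a \<noteq> b" and P: "sub b a P = P"
  shows "dd a b (P * G) = P * dd a b G"
proof (rule tvar_cancel[OF ab])
  have "(tvar a - tvar b) * dd a b (P * G) = P * (sub b a G - G)"
    by (simp only: dd_char sub_mult P right_diff_distrib)
  also have "\<dots> = (tvar a - tvar b) * (P * dd a b G)"
    by (simp only: dd_char[symmetric] mult.left_commute)
  finally show "(tvar a - tvar b) * dd a b (P * G) = (tvar a - tvar b) * (P * dd a b G)" .
qed

lemma E_alg:
  fixes ti tj tk b a Y Yji Yki Ykj Z D1 D2 SD1 D3 D4 D5 SD3 D6 SD1k fi fj :: "'r::comm_ring_1"
  assumes fi: "fi = ti*ti + b*ti + a" and fj: "fj = tj*tj + b*tj + a"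
  and h1: "(tj - tk)*D1 = Ykj - Y"
  and h2: "(ti - tj)*D2 = (ti*Yji + fi*SD1) - (tj*Y + fj*D1)"
  and h3: "(ti - tk)*SD1 = Z - Yji"
  and h4: "(ti - tj)*D3 = Yji - Y"
  and h5: "(ti - tk)*D4 = Yki - Y"
  and h6: "(ti - tk)*D5 = SD3 - D3"
  and h7: "(ti - tj)*SD3 = Z - Yki"
  and h8: "(ti - tk)*D6 = SD1k - D1"
  and h9: "(tj - ti)*SD1k = Ykj - Yki"
  shows "(ti-tj)*((ti-tk)*((tj-tk)*((ti*(tj*Y + fj*D1) + fi*D2) - (ti*(ti*Y + fi*D3) + fi*(ti*D4 + fi*D5))
     - (ti*(tj*Y + fj*D1) + fi*(tj*D4 + fj*D6)) - b*(ti*Y + fi*D4) - a*Y))) = 0"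
proof -
  define E' where "E' = D2 - Y - ti*D3 - (ti+tj+b)*D4 - fi*D5 - fj*D6"
  have fE: "(ti*(tj*Y + fj*D1) + fi*D2) - (ti*(ti*Y + fi*D3) + fi*(ti*D4 + fi*D5))
     - (ti*(tj*Y + fj*D1) + fi*(tj*D4 + fj*D6)) - b*(ti*Y + fi*D4) - a*Y = fi * E'"
    unfolding E'_def fi by (simp add: algebra_simps)
  have s: "(ti-tj)*((ti-tk)*((tj-tk)*E')) = (ti-tk)*(tj-tk)*((ti-tj)*D2) - (ti-tj)*(ti-tk)*(tj-tk)*Y
      - ti*(ti-tk)*(tj-tk)*((ti-tj)*D3) - (ti+tj+b)*(ti-tj)*(tj-tk)*((ti-tk)*D4)
      - fi*(tj-tk)*((ti-tj)*((ti-tk)*D5)) - fj*((ti-tj)*(tj-tk)*((ti-tk)*D6))"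
    unfolding E'_def by (simp add: algebra_simps)
  have k2: "(ti-tk)*(tj-tk)*((ti-tj)*D2) = (ti-tk)*(tj-tk)*(ti*Yji - tj*Y) + fi*(tj-tk)*(Z - Yji) - fj*(ti-tk)*(Ykj - Y)"
  proof -
    have "(ti-tk)*(tj-tk)*((ti-tj)*D2) = (ti-tk)*(tj-tk)*(ti*Yji - tj*Y) + fi*(tj-tk)*((ti-tk)*SD1) - fj*(ti-tk)*((tj-tk)*D1)"
      unfolding h2 by (simp add: algebra_simps)
    then show ?thesis unfolding h3 h1 .
  qed
  have k5: "(ti-tj)*((ti-tk)*D5) = (Z - Yki) - (Yji - Y)"
  proof -
    have "(ti-tj)*((ti-tk)*D5) = (ti-tj)*SD3 - (ti-tj)*D3"
      unfolding h6 by (simp add: algebra_simps)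
    then show ?thesis unfolding h7 h4 .
  qed
  have k6: "(ti-tj)*(tj-tk)*((ti-tk)*D6) = - (tj-tk)*(Ykj - Yki) - (ti-tj)*(Ykj - Y)"
  proof -
    have "(ti-tj)*(tj-tk)*((ti-tk)*D6) = - (tj-tk)*((tj-ti)*SD1k) - (ti-tj)*((tj-tk)*D1)"
      unfolding h8 by (simp add: algebra_simps)
    then show ?thesis unfolding h9 h1 .
  qed
  have z: "(ti-tj)*((ti-tk)*((tj-tk)*E')) = 0"
    unfolding s k2 k5 k6 h4 h5 fi fj by (simp add: algebra_simps)
  have "(ti-tj)*((ti-tk)*((tj-tk)*(fi*E'))) = fi*((ti-tj)*((ti-tk)*((tj-tk)*E')))"
    by (simp only: mult.left_commute)
  then show ?thesis unfolding fE z by simp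
qed

lemma sub_tvar_diff: "x \<noteq> b \<Longrightarrow> y \<noteq> b \<Longrightarrow> sub b a (tvar x - tvar y) = tvar x - tvar y"
  by (simp add: hom_diff[OF hom_sub] sub_tvar)

lemma dd_step:
  assumes "sub b a Q = Q"
  shows "Q * ((tvar a - tvar b) * dd a b H) = sub b a (Q * H) - Q * H"
  by (simp add: dd_char sub_mult assms right_diff_distrib)

lemma dd_comm:
  assumes ab: "a \<noteq> b" and cd: "c \<noteq> d" and ad: "a \<noteq> d" and cb: "c \<noteq> b"
  shows "dd a b (dd c d G) = dd c d (dd a b G)"
proof (cases "a = c")
  case ac: True
  show ?thesis
  proof (cases "b = d")
    case True with ac show ?thesis by simp
  next
    case bd: False
    have "(tvar a - tvar d) * ((tvar a - tvar b) * dd a b (dd a d G))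
        = sub b a ((tvar a - tvar d) * dd a d G) - (tvar a - tvar d) * dd a d G"
      by (rule dd_step) (use ab bd ad in \<open>simp add: sub_tvar_diff\<close>)
    also have "\<dots> = sub b a (sub d a G) - sub b a G - (sub d a G - G)"
      by (simp add: dd_char hom_diff[OF hom_sub])
    also have "\<dots> = sub d a (sub b a G) - sub d a G - (sub b a G - G)"
      using sub_sub_comm[of b d a a G] ab bd ad by (simp add: algebra_simps)
    also have "\<dots> = sub d a ((tvar a - tvar b) * dd a b G) - (tvar a - tvar b) * dd a b G"
      by (simp add: dd_char hom_diff[OF hom_sub])
    also have "\<dots> = (tvar a - tvar b) * ((tvar a - tvar d) * dd a d (dd a b G))"
      by (rule dd_step[symmetric]) (use ab bd ad in \<open>simp add: sub_tvar_diff\<close>)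
    finally have "(tvar a - tvar d) * ((tvar a - tvar b) * dd a b (dd a d G))
       = (tvar a - tvar d) * ((tvar a - tvar b) * dd a d (dd a b G))"
      by (simp add: algebra_simps)
    then have "(tvar a - tvar b) * dd a b (dd a d G) = (tvar a - tvar b) * dd a d (dd a b G)"
      by (rule tvar_cancel[OF ad])
    then show ?thesis using ac by (simp add: tvar_cancel[OF ab])
  qed
next
  case ac: False
  show ?thesis
  proof (cases "b = d")
    case bd: True
    have ca: "c \<noteq> a" using ac by simp
    have e1: "(tvar c - tvar a) * sub b a (dd c b G) = sub b c G - sub b a G"
    proof -
      have "(tvar c - tvar a) * sub b a (dd c b G) = sub b a ((tvar c - tvar b) * dd c b G)"
        by (simp add: sub_mult sub_tvar cb ab[symmetric] hom_diff[OF hom_sub])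
      also have "\<dots> = sub b c G - sub b a G"
        by (simp add: dd_char hom_diff[OF hom_sub] sub_sub_absorb cb)
      finally show ?thesis .
    qed
    have e2: "(tvar a - tvar c) * sub b c (dd a b G) = sub b a G - sub b c G"
    proof -
      have "(tvar a - tvar c) * sub b c (dd a b G) = sub b c ((tvar a - tvar b) * dd a b G)"
        by (simp add: sub_mult sub_tvar cb ab hom_diff[OF hom_sub])
      also have "\<dots> = sub b a G - sub b c G"
        by (simp add: dd_char hom_diff[OF hom_sub] sub_sub_absorb ab)
      finally show ?thesis .
    qed
    have c1: "(tvar a - tvar b) * dd a b (dd c b G) = sub b a (dd c b G) - dd c b G" by (rule dd_char)
    have c2: "(tvar c - tvar b) * dd c b (dd a b G) = sub b c (dd a b G) - dd a b G" by (rule dd_char)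
    have c3: "(tvar c - tvar b) * dd c b G = sub b c G - G" by (rule dd_char)
    have c4: "(tvar a - tvar b) * dd a b G = sub b a G - G" by (rule dd_char)
    have "(tvar c - tvar a) * ((tvar c - tvar b) * ((tvar a - tvar b) * dd a b (dd c b G)))
        = (tvar c - tvar a) * ((tvar c - tvar b) * ((tvar a - tvar b) * dd c b (dd a b G)))"
    proof -
      define X1 where "X1 = dd a b (dd c b G)"
      define X2 where "X2 = dd c b (dd a b G)"
      define S1 where "S1 = sub b a (dd c b G)"
      define S2 where "S2 = sub b c (dd a b G)"
      define H1 where "H1 = dd c b G"
      define H2 where "H2 = dd a b G"
      define ta where "ta = (tvar a :: 'a tpoly)"
      define tb where "tb = (tvar b :: 'a tpoly)"
      define tc where "tc = (tvar c :: 'a tpoly)"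
      define Ga where "Ga = sub b a G"
      define Gc where "Gc = sub b c G"
      have "(tc - ta) * S1 = Gc - Ga" "(ta - tc) * S2 = Ga - Gc"
        "(ta - tb) * X1 = S1 - H1" "(tc - tb) * X2 = S2 - H2"
        "(tc - tb) * H1 = Gc - G" "(ta - tb) * H2 = Ga - G"
        using e1 e2 c1 c2 c3 c4 by (simp_all add: X1_def X2_def S1_def S2_def H1_def H2_def ta_def tb_def tc_def Ga_def Gc_def)
      then have "(tc - ta) * ((tc - tb) * ((ta - tb) * X1)) = (tc - ta) * ((tc - tb) * ((ta - tb) * X2))"
      proof -
        assume h: "(tc - ta) * S1 = Gc - Ga" "(ta - tc) * S2 = Ga - Gc"
          "(ta - tb) * X1 = S1 - H1" "(tc - tb) * X2 = S2 - H2"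
          "(tc - tb) * H1 = Gc - G" "(ta - tb) * H2 = Ga - G"
        have "(tc - ta) * ((tc - tb) * ((ta - tb) * X1)) = (tc - ta) * ((tc - tb) * (S1 - H1))"
          by (simp only: h(3))
        also have "\<dots> = (tc - tb) * ((tc - ta) * S1) - (tc - ta) * ((tc - tb) * H1)" by (simp add: algebra_simps)
        also have "\<dots> = (tc - tb) * (Gc - Ga) - (tc - ta) * (Gc - G)" by (simp only: h)
        also have "\<dots> = - ((ta - tb) * (Ga - Gc) - (ta - tc) * (Ga - G))" by (simp add: algebra_simps)
        also have "(ta - tb) * (Ga - Gc) - (ta - tc) * (Ga - G) = (ta - tb) * ((ta - tc) * S2) - (ta - tc) * ((ta - tb) * H2)"
          by (simp only: h)
        also have "- \<dots> = (tc - ta) * ((ta - tb) * (S2 - H2))" by (simp add: algebra_simps)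
        also have "\<dots> = (tc - ta) * ((ta - tb) * ((tc - tb) * X2))" by (simp only: h(4))
        also have "\<dots> = (tc - ta) * ((tc - tb) * ((ta - tb) * X2))" by (simp add: algebra_simps)
        finally show ?thesis .
      qed
      then show ?thesis by (simp add: X1_def X2_def ta_def tb_def tc_def)
    qed
    then have "dd a b (dd c b G) = dd c b (dd a b G)"
      by (meson ab ca cb tvar_cancel)
    then show ?thesis using bd by simp
  next
    case bd: False
    have "(tvar c - tvar d) * ((tvar a - tvar b) * dd a b (dd c d G))
        = sub b a ((tvar c - tvar d) * dd c d G) - (tvar c - tvar d) * dd c d G"
      by (rule dd_step) (use cb bd in \<open>simp add: sub_tvar_diff\<close>)
    also have "\<dots> = sub b a (sub d c G) - sub b a G - (sub d c G - G)"
      by (simp add: dd_char hom_diff[OF hom_sub])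
    also have "\<dots> = sub d c (sub b a G) - sub d c G - (sub b a G - G)"
      using sub_sub_comm[of b d a c G] bd ad cb by (simp add: algebra_simps)
    also have "\<dots> = sub d c ((tvar a - tvar b) * dd a b G) - (tvar a - tvar b) * dd a b G"
      by (simp add: dd_char hom_diff[OF hom_sub])
    also have "\<dots> = (tvar a - tvar b) * ((tvar c - tvar d) * dd c d (dd a b G))"
      by (rule dd_step[symmetric]) (use ad bd in \<open>simp add: sub_tvar_diff\<close>)
    finally have "(tvar c - tvar d) * ((tvar a - tvar b) * dd a b (dd c d G))
       = (tvar c - tvar d) * ((tvar a - tvar b) * dd c d (dd a b G))"
      by (simp add: algebra_simps)
    then show ?thesis by (meson ab cd tvar_cancel)
  qed
qed

section \<open>The operators A\<close>

definition fpoly :: "'a::comm_ring_1 \<Rightarrow> 'a \<Rightarrow> 'a tpoly \<Rightarrow> 'a tpoly" where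
  "fpoly \<beta> \<alpha> x = x * x + tconst \<beta> * x + tconst \<alpha>"

definition Aop :: "'a::comm_ring_1 \<Rightarrow> 'a \<Rightarrow> nat \<Rightarrow> nat \<Rightarrow> 'a tpoly \<Rightarrow> 'a tpoly" where
  "Aop \<beta> \<alpha> a b G = tvar a * G + fpoly \<beta> \<alpha> (tvar a) * dd a b G"

lemma sub_fpoly: "sub b a (fpoly \<beta> \<alpha> x) = fpoly \<beta> \<alpha> (sub b a x)"
  by (simp add: fpoly_def sub_add sub_mult sub_tconst)

lemma sub_fpoly_tvar: "x \<noteq> b \<Longrightarrow> sub b a (fpoly \<beta> \<alpha> (tvar x)) = fpoly \<beta> \<alpha> (tvar x)"
  by (simp add: sub_fpoly sub_tvar)

lemma sub_tvar_other: "x \<noteq> b \<Longrightarrow> sub b a (tvar x) = tvar x"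
  by (simp add: sub_tvar)

lemma Aop_add: "Aop \<beta> \<alpha> a b (X + Y) = Aop \<beta> \<alpha> a b X + Aop \<beta> \<alpha> a b Y"
  by (simp add: Aop_def dd_add algebra_simps)

lemma Aop_diff: "Aop \<beta> \<alpha> a b (X - Y) = Aop \<beta> \<alpha> a b X - Aop \<beta> \<alpha> a b Y"
  by (simp add: Aop_def dd_diff algebra_simps)

lemma Aop_tconst:
  assumes "a \<noteq> b" shows "Aop \<beta> \<alpha> a b (tconst c * X) = tconst c * Aop \<beta> \<alpha> a b X"
proof -
  have "dd a b (tconst c * X) = tconst c * dd a b X" by (rule dd_mult_free[OF assms sub_tconst])
  then show ?thesis by (simp add: Aop_def algebra_simps)
qed

lemma Aop_comm:
  assumes ab: "a \<noteq> b" and cd: "c \<noteq> d" and ad: "a \<noteq> d" and cb: "c \<noteq> b"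
  shows "Aop \<beta> \<alpha> a b (Aop \<beta> \<alpha> c d G) = Aop \<beta> \<alpha> c d (Aop \<beta> \<alpha> a b G)"
proof -
  have s1: "sub b a (tvar c) = tvar c" "sub b a (fpoly \<beta> \<alpha> (tvar c)) = fpoly \<beta> \<alpha> (tvar c)"
    using cb by (simp_all add: sub_tvar_other sub_fpoly_tvar)
  have s2: "sub d c (tvar a) = tvar a" "sub d c (fpoly \<beta> \<alpha> (tvar a)) = fpoly \<beta> \<alpha> (tvar a)"
    using ad by (simp_all add: sub_tvar_other sub_fpoly_tvar)
  show ?thesis
    unfolding Aop_def
    by (simp only: dd_add dd_mult_free[OF ab s1(1)] dd_mult_free[OF ab s1(2)] dd_mult_free[OF cd s2(1)]
        dd_mult_free[OF cd s2(2)] dd_comm[OF ab cd ad cb]) (simp add: algebra_simps)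
qed

lemma Aop_E:
  assumes ij: "i \<noteq> j" and jk: "j \<noteq> k" and ik: "i \<noteq> k"
  shows "Aop \<beta> \<alpha> i j (Aop \<beta> \<alpha> j k Y) - Aop \<beta> \<alpha> i k (Aop \<beta> \<alpha> i j Y) - Aop \<beta> \<alpha> i k (Aop \<beta> \<alpha> j k Y)
     - tconst \<beta> * Aop \<beta> \<alpha> i k Y - tconst \<alpha> * Y = 0"
proof -
  define ti where "ti = (tvar i :: 'a tpoly)"
  define tj where "tj = (tvar j :: 'a tpoly)"
  define tk where "tk = (tvar k :: 'a tpoly)"
  define fi where "fi = fpoly \<beta> \<alpha> ti"
  define fj where "fj = fpoly \<beta> \<alpha> tj"
  define D1 where "D1 = dd j k Y"
  define AjkY where "AjkY = tj * Y + fj * D1"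
  define D2 where "D2 = dd i j AjkY"
  define SD1 where "SD1 = sub j i D1"
  define D3 where "D3 = dd i j Y"
  define D4 where "D4 = dd i k Y"
  define D5 where "D5 = dd i k D3"
  define SD3 where "SD3 = sub k i D3"
  define D6 where "D6 = dd i k D1"
  define SD1k where "SD1k = sub k i D1"
  define Yji where "Yji = sub j i Y"
  define Yki where "Yki = sub k i Y"
  define Ykj where "Ykj = sub k j Y"
  define Z where "Z = sub j i (sub k j Y)"
  have fi: "fi = ti*ti + tconst \<beta>*ti + tconst \<alpha>" by (simp add: fi_def fpoly_def)
  have fj: "fj = tj*tj + tconst \<beta>*tj + tconst \<alpha>" by (simp add: fj_def fpoly_def)
  have sji: "sub j i tj = ti" "sub j i tk = tk" "sub j i fj = fi" "sub j i ti = ti"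
    using ij jk ik by (simp_all add: tj_def ti_def tk_def fi_def fj_def sub_tvar sub_fpoly)
  have ski: "sub k i ti = ti" "sub k i tj = tj" "sub k i tk = ti" "sub k i fi = fi" "sub k i fj = fj"
    using ij jk ik by (simp_all add: tj_def ti_def tk_def fi_def fj_def sub_tvar sub_fpoly)
  have h1: "(tj - tk)*D1 = Ykj - Y" by (simp add: tj_def tk_def D1_def Ykj_def dd_char)
  have h2: "(ti - tj)*D2 = (ti*Yji + fi*SD1) - (tj*Y + fj*D1)"
    by (simp add: ti_def tj_def D2_def dd_char AjkY_def sub_add sub_mult sji[unfolded ti_def tj_def] Yji_def SD1_def)
  have h3: "(ti - tk)*SD1 = Z - Yji"
  proof -
    have "(ti - tk)*SD1 = sub j i ((tj - tk)*D1)"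
      by (simp add: SD1_def sub_mult hom_diff[OF hom_sub] sji)
    then show ?thesis by (simp add: h1 hom_diff[OF hom_sub] Z_def Ykj_def Yji_def)
  qed
  have h4: "(ti - tj)*D3 = Yji - Y" by (simp add: ti_def tj_def D3_def Yji_def dd_char)
  have h5: "(ti - tk)*D4 = Yki - Y" by (simp add: ti_def tk_def D4_def Yki_def dd_char)
  have h6: "(ti - tk)*D5 = SD3 - D3" by (simp add: ti_def tk_def D5_def SD3_def dd_char)
  have h7: "(ti - tj)*SD3 = Z - Yki"
  proof -
    have "(ti - tj)*SD3 = sub k i ((ti - tj)*D3)"
      by (simp add: SD3_def sub_mult hom_diff[OF hom_sub] ski)
    then show ?thesis
      by (simp add: h4 hom_diff[OF hom_sub] Z_def Yki_def Yji_def sub_sub_E[OF ij jk ik])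
  qed
  have h8: "(ti - tk)*D6 = SD1k - D1" by (simp add: ti_def tk_def D6_def SD1k_def dd_char)
  have h9: "(tj - ti)*SD1k = Ykj - Yki"
  proof -
    have "(tj - ti)*SD1k = sub k i ((tj - tk)*D1)"
      by (simp add: SD1k_def sub_mult hom_diff[OF hom_sub] ski)
    then show ?thesis
      using jk by (simp add: h1 hom_diff[OF hom_sub] Ykj_def Yki_def sub_sub_absorb)
  qed
  have T1: "Aop \<beta> \<alpha> i j (Aop \<beta> \<alpha> j k Y) = ti*(tj*Y + fj*D1) + fi*D2"
    by (simp add: Aop_def AjkY_def D2_def ti_def tj_def fi_def fj_def D1_def)
  have T2: "Aop \<beta> \<alpha> i k (Aop \<beta> \<alpha> i j Y) = ti*(ti*Y + fi*D3) + fi*(ti*D4 + fi*D5)"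
  proof -
    have "dd i k (ti * Y + fi * D3) = ti*D4 + fi*D5"
      using ik by (simp add: dd_add dd_mult_free ski D4_def D5_def)
    then show ?thesis by (simp add: Aop_def ti_def fi_def D3_def)
  qed
  have T3: "Aop \<beta> \<alpha> i k (Aop \<beta> \<alpha> j k Y) = ti*(tj*Y + fj*D1) + fi*(tj*D4 + fj*D6)"
  proof -
    have "dd i k (tj * Y + fj * D1) = tj*D4 + fj*D6"
      using ik by (simp add: dd_add dd_mult_free ski D4_def D6_def)
    then show ?thesis by (simp add: Aop_def ti_def tj_def fi_def fj_def D1_def)
  qed
  have T4: "Aop \<beta> \<alpha> i k Y = ti*Y + fi*D4" by (simp add: Aop_def ti_def fi_def D4_def)
  have M: "(ti-tj)*((ti-tk)*((tj-tk)*((ti*(tj*Y + fj*D1) + fi*D2) - (ti*(ti*Y + fi*D3) + fi*(ti*D4 + fi*D5))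
     - (ti*(tj*Y + fj*D1) + fi*(tj*D4 + fj*D6)) - tconst \<beta>*(ti*Y + fi*D4) - tconst \<alpha>*Y))) = 0"
    by (rule E_alg[OF fi fj h1 h2 h3 h4 h5 h6 h7 h8 h9])
  show ?thesis
    unfolding T1 T2 T3 T4
    using M unfolding ti_def tj_def tk_def
    by (meson ij ik jk tvar_cancel_zero)
qed

section \<open>The linear functional\<close>

definition Bl :: "'a::comm_ring_1 \<Rightarrow> 'a \<Rightarrow> nat \<Rightarrow> nat \<Rightarrow> ((nat \<times> nat) \<Rightarrow>\<^sub>0 nat) \<Rightarrow> 'a tpoly \<Rightarrow> 'a tpoly" where
  "Bl \<beta> \<alpha> n l m G = List.foldr (\<lambda>p acc. (Aop \<beta> \<alpha> l p ^^ Poly_Mapping.lookup m (l, p)) acc) [Suc l..<Suc n] G"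

function V :: "'a::comm_ring_1 \<Rightarrow> 'a \<Rightarrow> nat \<Rightarrow> nat \<Rightarrow> ((nat \<times> nat) \<Rightarrow>\<^sub>0 nat) \<Rightarrow> 'a tpoly" where
  "V \<beta> \<alpha> n l m = (if n < l then 1 else Bl \<beta> \<alpha> n l m (V \<beta> \<alpha> n (Suc l) m))"
  by pat_completeness auto
termination by (relation "measure (\<lambda>(\<beta>, \<alpha>, n, l, m). Suc n - l)") auto

declare V.simps[simp del]

lemma V_le: "l \<le> n \<Longrightarrow> V \<beta> \<alpha> n l m = Bl \<beta> \<alpha> n l m (V \<beta> \<alpha> n (Suc l) m)"
  by (subst V.simps) simp

lemma V_gt: "n < l \<Longrightarrow> V \<beta> \<alpha> n l m = 1"
  by (subst V.simps) simp

definition Fm :: "'a::comm_ring_1 \<Rightarrow> 'a \<Rightarrow> nat \<Rightarrow> ((nat \<times> nat) \<Rightarrow>\<^sub>0 nat) \<Rightarrow> 'a tpoly" where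
  "Fm \<beta> \<alpha> n m = V \<beta> \<alpha> n 1 m"

lemma funpow_Aop_add: "a \<noteq> b \<Longrightarrow> (Aop \<beta> \<alpha> a b ^^ k) (X + Y) = (Aop \<beta> \<alpha> a b ^^ k) X + (Aop \<beta> \<alpha> a b ^^ k) Y"
  by (induction k) (simp_all add: Aop_add)

lemma funpow_Aop_diff: "a \<noteq> b \<Longrightarrow> (Aop \<beta> \<alpha> a b ^^ k) (X - Y) = (Aop \<beta> \<alpha> a b ^^ k) X - (Aop \<beta> \<alpha> a b ^^ k) Y"
  by (induction k) (simp_all add: Aop_diff)

lemma funpow_Aop_tconst: "a \<noteq> b \<Longrightarrow> (Aop \<beta> \<alpha> a b ^^ k) (tconst c * X) = tconst c * (Aop \<beta> \<alpha> a b ^^ k) X"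
  by (induction k) (simp_all add: Aop_tconst)

lemma foldr_Aop_lin:
  assumes "\<forall>p\<in>set ps. p \<noteq> l"
  shows "List.foldr (\<lambda>p acc. (Aop \<beta> \<alpha> l p ^^ f p) acc) ps (X - Y)
      = List.foldr (\<lambda>p acc. (Aop \<beta> \<alpha> l p ^^ f p) acc) ps X - List.foldr (\<lambda>p acc. (Aop \<beta> \<alpha> l p ^^ f p) acc) ps Y"
    and "List.foldr (\<lambda>p acc. (Aop \<beta> \<alpha> l p ^^ f p) acc) ps (tconst c * X)
      = tconst c * List.foldr (\<lambda>p acc. (Aop \<beta> \<alpha> l p ^^ f p) acc) ps X"
  using assms
  by (induction ps) (auto simp: funpow_Aop_diff funpow_Aop_tconst)

lemma Bl_diff: "Bl \<beta> \<alpha> n l m (X - Y) = Bl \<beta> \<alpha> n l m X - Bl \<beta> \<alpha> n l m Y"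
  unfolding Bl_def by (rule foldr_Aop_lin(1)) auto

lemma Bl_tconst: "Bl \<beta> \<alpha> n l m (tconst c * X) = tconst c * Bl \<beta> \<alpha> n l m X"
  unfolding Bl_def by (rule foldr_Aop_lin(2)) auto

lemma funpow_Aop_comm:
  assumes "a \<noteq> b" "c \<noteq> d" "a \<noteq> d" "c \<noteq> b"
  shows "Aop \<beta> \<alpha> a b ((Aop \<beta> \<alpha> c d ^^ k) G) = (Aop \<beta> \<alpha> c d ^^ k) (Aop \<beta> \<alpha> a b G)"
  by (induction k) (simp_all add: Aop_comm[OF assms])

lemma foldr_Aop_comm:
  assumes "a \<noteq> b" "\<forall>p\<in>set ps. l \<noteq> p \<and> a \<noteq> p" "l \<noteq> b"
  shows "Aop \<beta> \<alpha> a b (List.foldr (\<lambda>p acc. (Aop \<beta> \<alpha> l p ^^ f p) acc) ps G)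
       = List.foldr (\<lambda>p acc. (Aop \<beta> \<alpha> l p ^^ f p) acc) ps (Aop \<beta> \<alpha> a b G)"
  using assms
  by (induction ps) (auto simp: funpow_Aop_comm)

lemma Bl_comm:
  assumes "a \<noteq> b" "a \<le> l" "l \<noteq> b"
  shows "Aop \<beta> \<alpha> a b (Bl \<beta> \<alpha> n l m G) = Bl \<beta> \<alpha> n l m (Aop \<beta> \<alpha> a b G)"
  unfolding Bl_def by (rule foldr_Aop_comm) (use assms in auto)

lemma Bl_cong:
  assumes "\<And>p. Poly_Mapping.lookup m (l, p) = Poly_Mapping.lookup m' (l, p)"
  shows "Bl \<beta> \<alpha> n l m = Bl \<beta> \<alpha> n l m'"
  by (simp add: Bl_def assms fun_eq_iff)

lemma V_cong:
  assumes "\<And>x y. l \<le> x \<Longrightarrow> Poly_Mapping.lookup m (x, y) = Poly_Mapping.lookup m' (x, y)"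
  shows "V \<beta> \<alpha> n l m = V \<beta> \<alpha> n l m'"
  using assms
proof (induction "Suc n - l" arbitrary: l)
  case 0
  then show ?case by (simp add: V_gt)
next
  case (Suc x)
  show ?case
  proof (cases "n < l")
    case True then show ?thesis by (simp add: V_gt)
  next
    case False
    have "V \<beta> \<alpha> n (Suc l) m = V \<beta> \<alpha> n (Suc l) m'"
      using Suc by auto
    moreover have "Bl \<beta> \<alpha> n l m = Bl \<beta> \<alpha> n l m'"
      by (rule Bl_cong) (use Suc.prems in auto)
    ultimately show ?thesis using False by (simp add: V_le)
  qed
qed

definition edge :: "nat \<Rightarrow> nat \<Rightarrow> (nat \<times> nat) \<Rightarrow>\<^sub>0 nat" where
  "edge i j = Poly_Mapping.single (i, j) 1"

lemma lookup_edge: "Poly_Mapping.lookup (edge i j) v = (if v = (i, j) then 1 else 0)"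
  by (simp add: edge_def lookup_single when_def)

lemma foldr_add_edge:
  assumes "distinct ps" "q \<in> set ps" "\<forall>p\<in>set ps. p \<noteq> l"
  shows "List.foldr (\<lambda>p acc. (Aop \<beta> \<alpha> l p ^^ Poly_Mapping.lookup (m + edge l q) (l, p)) acc) ps G
       = Aop \<beta> \<alpha> l q (List.foldr (\<lambda>p acc. (Aop \<beta> \<alpha> l p ^^ Poly_Mapping.lookup m (l, p)) acc) ps G)"
  using assms
proof (induction ps)
  case Nil then show ?case by simp
next
  case (Cons p ps)
  show ?case
  proof (cases "p = q")
    case True
    then have "q \<notin> set ps" using Cons.prems by auto
    then have "List.foldr (\<lambda>p acc. (Aop \<beta> \<alpha> l p ^^ Poly_Mapping.lookup (m + edge l q) (l, p)) acc) ps G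
       = List.foldr (\<lambda>p acc. (Aop \<beta> \<alpha> l p ^^ Poly_Mapping.lookup m (l, p)) acc) ps G"
      by (intro foldr_cong) (auto simp: lookup_add lookup_edge)
    then show ?thesis using True by (simp add: lookup_add lookup_edge)
  next
    case False
    then have "q \<in> set ps" using Cons.prems by auto
    then have IH: "List.foldr (\<lambda>p acc. (Aop \<beta> \<alpha> l p ^^ Poly_Mapping.lookup (m + edge l q) (l, p)) acc) ps G
       = Aop \<beta> \<alpha> l q (List.foldr (\<lambda>p acc. (Aop \<beta> \<alpha> l p ^^ Poly_Mapping.lookup m (l, p)) acc) ps G)"
      using Cons by auto
    have lq: "l \<noteq> q" using Cons.prems by auto
    have lp: "l \<noteq> p" using Cons.prems by auto
    show ?thesis
      using False IH by (simp add: lookup_add lookup_edge funpow_Aop_comm[OF lq lp lp lq])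
  qed
qed

lemma Bl_add_edge:
  assumes "l < q" "q \<le> n"
  shows "Bl \<beta> \<alpha> n l (m + edge l q) G = Aop \<beta> \<alpha> l q (Bl \<beta> \<alpha> n l m G)"
  unfolding Bl_def by (rule foldr_add_edge) (use assms in auto)


lemma Bl_zero: "Bl \<beta> \<alpha> n l m 0 = 0"
  using Bl_diff[of \<beta> \<alpha> n l m 0 0] by simp

lemma Phi_zero:
  assumes ij: "i < j" and jk: "j < k" and kn: "k \<le> n"
  shows "i < l \<Longrightarrow> l \<le> j \<Longrightarrow>
    Aop \<beta> \<alpha> i j (V \<beta> \<alpha> n l (m + edge j k)) - Aop \<beta> \<alpha> i k (Aop \<beta> \<alpha> i j (V \<beta> \<alpha> n l m))
    - Aop \<beta> \<alpha> i k (V \<beta> \<alpha> n l (m + edge j k)) - tconst \<beta> * Aop \<beta> \<alpha> i k (V \<beta> \<alpha> n l m)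
    - tconst \<alpha> * V \<beta> \<alpha> n l m = 0"
proof (induction "j - l" arbitrary: l)
  case 0
  then have lj: "l = j" by simp
  have "V \<beta> \<alpha> n (Suc j) (m + edge j k) = V \<beta> \<alpha> n (Suc j) m"
    by (rule V_cong) (auto simp: lookup_add lookup_edge)
  then have "V \<beta> \<alpha> n j (m + edge j k) = Aop \<beta> \<alpha> j k (V \<beta> \<alpha> n j m)"
    using jk kn by (simp add: V_le Bl_add_edge)
  then show ?case using lj Aop_E[of i j k \<beta> \<alpha> "V \<beta> \<alpha> n j m"] ij jk by simp
next
  case (Suc d)
  have lj: "l < j" "Suc l \<le> j" "i < Suc l" "d = j - Suc l" using Suc by auto
  have IH: "Aop \<beta> \<alpha> i j (V \<beta> \<alpha> n (Suc l) (m + edge j k)) - Aop \<beta> \<alpha> i k (Aop \<beta> \<alpha> i j (V \<beta> \<alpha> n (Suc l) m))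
    - Aop \<beta> \<alpha> i k (V \<beta> \<alpha> n (Suc l) (m + edge j k)) - tconst \<beta> * Aop \<beta> \<alpha> i k (V \<beta> \<alpha> n (Suc l) m)
    - tconst \<alpha> * V \<beta> \<alpha> n (Suc l) m = 0"
    using Suc.hyps(1)[OF lj(4) lj(3) lj(2)] .
  have ln: "l \<le> n" using lj jk kn by simp
  have c: "Bl \<beta> \<alpha> n l (m + edge j k) = Bl \<beta> \<alpha> n l m"
    by (rule Bl_cong) (use lj in \<open>auto simp: lookup_add lookup_edge\<close>)
  have v1: "V \<beta> \<alpha> n l (m + edge j k) = Bl \<beta> \<alpha> n l m (V \<beta> \<alpha> n (Suc l) (m + edge j k))"
    using ln c by (simp add: V_le)
  have v2: "V \<beta> \<alpha> n l m = Bl \<beta> \<alpha> n l m (V \<beta> \<alpha> n (Suc l) m)"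
    using ln by (simp add: V_le)
  have cij: "Aop \<beta> \<alpha> i j (Bl \<beta> \<alpha> n l m G) = Bl \<beta> \<alpha> n l m (Aop \<beta> \<alpha> i j G)" for G
    by (rule Bl_comm) (use lj ij Suc.prems in auto)
  have cik: "Aop \<beta> \<alpha> i k (Bl \<beta> \<alpha> n l m G) = Bl \<beta> \<alpha> n l m (Aop \<beta> \<alpha> i k G)" for G
    by (rule Bl_comm) (use lj ij jk Suc.prems in auto)
  show ?case
    unfolding v1 v2 cij cik
    by (simp only: Bl_diff[symmetric] Bl_tconst[symmetric] IH Bl_zero)
qed

lemma Psi_zero:
  assumes i1: "1 \<le> i" and ij: "i < j" and jk: "j < k" and kn: "k \<le> n"
  shows "1 \<le> l \<Longrightarrow> l \<le> i \<Longrightarrow>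
    V \<beta> \<alpha> n l (m + edge i j + edge j k) - V \<beta> \<alpha> n l (m + edge i k + edge i j)
    - V \<beta> \<alpha> n l (m + edge i k + edge j k) - tconst \<beta> * V \<beta> \<alpha> n l (m + edge i k)
    - tconst \<alpha> * V \<beta> \<alpha> n l m = 0"
proof (induction "i - l" arbitrary: l)
  case 0
  then have li: "l = i" by simp
  have inn: "i \<le> n" using ij jk kn by simp
  let ?B = "Bl \<beta> \<alpha> n i m"
  have P: "Aop \<beta> \<alpha> i j (V \<beta> \<alpha> n (Suc i) (m + edge j k)) - Aop \<beta> \<alpha> i k (Aop \<beta> \<alpha> i j (V \<beta> \<alpha> n (Suc i) m))
    - Aop \<beta> \<alpha> i k (V \<beta> \<alpha> n (Suc i) (m + edge j k)) - tconst \<beta> * Aop \<beta> \<alpha> i k (V \<beta> \<alpha> n (Suc i) m)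
    - tconst \<alpha> * V \<beta> \<alpha> n (Suc i) m = 0"
    by (rule Phi_zero[OF ij jk kn]) (use ij in auto)
  have cij: "Aop \<beta> \<alpha> i j (?B G) = ?B (Aop \<beta> \<alpha> i j G)" for G
    by (rule Bl_comm) (use ij in auto)
  have cik: "Aop \<beta> \<alpha> i k (?B G) = ?B (Aop \<beta> \<alpha> i k G)" for G
    by (rule Bl_comm) (use ij jk in auto)
  have r1: "V \<beta> \<alpha> n (Suc i) (m + edge i j + edge j k) = V \<beta> \<alpha> n (Suc i) (m + edge j k)"
    by (rule V_cong) (auto simp: lookup_add lookup_edge)
  have r2: "V \<beta> \<alpha> n (Suc i) ((m + edge i j) + edge i k) = V \<beta> \<alpha> n (Suc i) m"
    by (rule V_cong) (auto simp: lookup_add lookup_edge)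
  have r3: "V \<beta> \<alpha> n (Suc i) (m + edge i k + edge j k) = V \<beta> \<alpha> n (Suc i) (m + edge j k)"
    by (rule V_cong) (auto simp: lookup_add lookup_edge)
  have r4: "V \<beta> \<alpha> n (Suc i) (m + edge i k) = V \<beta> \<alpha> n (Suc i) m"
    by (rule V_cong) (auto simp: lookup_add lookup_edge)
  have b1: "Bl \<beta> \<alpha> n i (m + edge i j + edge j k) = Bl \<beta> \<alpha> n i (m + edge i j)"
    by (rule Bl_cong) (use ij in \<open>auto simp: lookup_add lookup_edge\<close>)
  have b3: "Bl \<beta> \<alpha> n i (m + edge i k + edge j k) = Bl \<beta> \<alpha> n i (m + edge i k)"
    by (rule Bl_cong) (use ij in \<open>auto simp: lookup_add lookup_edge\<close>)
  have e2: "m + edge i k + edge i j = (m + edge i j) + edge i k" by (simp add: add_ac)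
  have jn: "j \<le> n" and ik: "i < k" using jk kn ij by auto
  have V1: "V \<beta> \<alpha> n i (m + edge i j + edge j k) = ?B (Aop \<beta> \<alpha> i j (V \<beta> \<alpha> n (Suc i) (m + edge j k)))"
    by (simp only: V_le[OF inn] r1 b1 Bl_add_edge[OF ij jn] cij)
  have V2: "V \<beta> \<alpha> n i (m + edge i k + edge i j) = ?B (Aop \<beta> \<alpha> i k (Aop \<beta> \<alpha> i j (V \<beta> \<alpha> n (Suc i) m)))"
    by (simp only: e2 V_le[OF inn] r2 Bl_add_edge[OF ik kn] Bl_add_edge[OF ij jn] cij cik)
  have V3: "V \<beta> \<alpha> n i (m + edge i k + edge j k) = ?B (Aop \<beta> \<alpha> i k (V \<beta> \<alpha> n (Suc i) (m + edge j k)))"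
    by (simp only: V_le[OF inn] r3 b3 Bl_add_edge[OF ik kn] cik)
  have V4: "V \<beta> \<alpha> n i (m + edge i k) = ?B (Aop \<beta> \<alpha> i k (V \<beta> \<alpha> n (Suc i) m))"
    by (simp only: V_le[OF inn] r4 Bl_add_edge[OF ik kn] cik)
  have V5: "V \<beta> \<alpha> n i m = ?B (V \<beta> \<alpha> n (Suc i) m)"
    by (simp only: V_le[OF inn])
  show ?case
    unfolding li V1 V2 V3 V4 V5
    by (simp only: Bl_diff[symmetric] Bl_tconst[symmetric] P Bl_zero)
next
  case (Suc d)
  have li: "l < i" "Suc l \<le> i" "1 \<le> Suc l" "d = i - Suc l" using Suc by auto
  have IH: "V \<beta> \<alpha> n (Suc l) (m + edge i j + edge j k) - V \<beta> \<alpha> n (Suc l) (m + edge i k + edge i j)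
    - V \<beta> \<alpha> n (Suc l) (m + edge i k + edge j k) - tconst \<beta> * V \<beta> \<alpha> n (Suc l) (m + edge i k)
    - tconst \<alpha> * V \<beta> \<alpha> n (Suc l) m = 0"
    using Suc.hyps(1)[OF li(4) li(3) li(2)] .
  have ln: "l \<le> n" using li ij jk kn by simp
  have bc: "Bl \<beta> \<alpha> n l (m + edge i j + edge j k) = Bl \<beta> \<alpha> n l m"
     "Bl \<beta> \<alpha> n l (m + edge i k + edge i j) = Bl \<beta> \<alpha> n l m"
     "Bl \<beta> \<alpha> n l (m + edge i k + edge j k) = Bl \<beta> \<alpha> n l m"
     "Bl \<beta> \<alpha> n l (m + edge i k) = Bl \<beta> \<alpha> n l m"
    by (rule Bl_cong; use li ij in \<open>auto simp: lookup_add lookup_edge\<close>)+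
  show ?case
    using ln
    by (simp only: V_le bc Bl_diff[symmetric] Bl_tconst[symmetric] IH Bl_zero)
qed

lemma Fm_rel:
  assumes "1 \<le> i" "i < j" "j < k" "k \<le> n"
  shows "Fm \<beta> \<alpha> n (m + edge i j + edge j k) - Fm \<beta> \<alpha> n (m + edge i k + edge i j)
    - Fm \<beta> \<alpha> n (m + edge i k + edge j k) - tconst \<beta> * Fm \<beta> \<alpha> n (m + edge i k)
    - tconst \<alpha> * Fm \<beta> \<alpha> n m = 0"
  unfolding Fm_def by (rule Psi_zero[OF assms]) (use assms in auto)


subsection \<open>The functional kills the ideal\<close>

definition Lx :: "'a::comm_ring_1 \<Rightarrow> 'a \<Rightarrow> nat \<Rightarrow> 'a xpoly \<Rightarrow> 'a tpoly" where
  "Lx \<beta> \<alpha> n = lin (Fm \<beta> \<alpha> n)"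

lemma single_Jgen:
  "Poly_Mapping.single m c * Jgen \<beta> \<alpha> i j k =
     Poly_Mapping.single (m + edge i j + edge j k) c - Poly_Mapping.single (m + edge i k + edge i j) c
   - Poly_Mapping.single (m + edge i k + edge j k) c - Poly_Mapping.single (m + edge i k) (c * \<beta>)
   - Poly_Mapping.single m (c * \<alpha>)"
  by (simp add: Jgen_def xvar_def xconst_def edge_def right_diff_distrib distrib_left
      mult.assoc[symmetric] mult_single add_ac)

lemma Lx_single_Jgen:
  assumes "1 \<le> i" "i < j" "j < k" "k \<le> n"
  shows "Lx \<beta> \<alpha> n (Poly_Mapping.single m c * Jgen \<beta> \<alpha> i j k) = 0"
proof -
  have "Lx \<beta> \<alpha> n (Poly_Mapping.single m c * Jgen \<beta> \<alpha> i j k) = tconst c *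
    (Fm \<beta> \<alpha> n (m + edge i j + edge j k) - Fm \<beta> \<alpha> n (m + edge i k + edge i j)
    - Fm \<beta> \<alpha> n (m + edge i k + edge j k) - tconst \<beta> * Fm \<beta> \<alpha> n (m + edge i k)
    - tconst \<alpha> * Fm \<beta> \<alpha> n m)"
  proof -
    have "Lx \<beta> \<alpha> n (Poly_Mapping.single m c * Jgen \<beta> \<alpha> i j k) =
      tconst c * Fm \<beta> \<alpha> n (m + edge i j + edge j k) - tconst c * Fm \<beta> \<alpha> n (m + edge i k + edge i j)
      - tconst c * Fm \<beta> \<alpha> n (m + edge i k + edge j k) - tconst (c * \<beta>) * Fm \<beta> \<alpha> n (m + edge i k)
      - tconst (c * \<alpha>) * Fm \<beta> \<alpha> n m"
      by (simp only: single_Jgen Lx_def lin_diff lin_single)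
    then show ?thesis by (simp add: tconst_mult algebra_simps)
  qed
  then show ?thesis by (simp only: Fm_rel[OF assms] mult_zero_right)
qed

lemma Lx_Jgen:
  assumes "1 \<le> i" "i < j" "j < k" "k \<le> n"
  shows "Lx \<beta> \<alpha> n (q * Jgen \<beta> \<alpha> i j k) = 0"
proof (induction q rule: poly_induct)
  case zero show ?case by (simp add: Lx_def)
next
  case (single m c) show ?case by (rule Lx_single_Jgen[OF assms])
next
  case (add p q) then show ?case by (simp add: distrib_right Lx_def lin_add)
qed

lemma Lx_Jideal:
  assumes "p \<in> Jideal n \<beta> \<alpha>"
  shows "Lx \<beta> \<alpha> n (q * p) = 0"
  using assms
proof (induction arbitrary: q rule: Jideal.induct)
  case (gen i j k) then show ?case by (rule Lx_Jgen)
next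
  case zero then show ?case by (simp add: Lx_def)
next
  case (add p1 p2) then show ?case by (simp add: distrib_left Lx_def lin_add)
next
  case (mult q' p) then show ?case by (metis mult.assoc)
qed


subsection \<open>Evaluation on pathless monomials\<close>

lemma dd_fixed:
  assumes "a \<noteq> b" "sub b a G = G"
  shows "dd a b G = 0"
proof -
  have "(tvar a - tvar b) * dd a b G = 0" by (simp add: dd_char assms(2))
  then show ?thesis by (rule tvar_cancel_zero[OF assms(1)])
qed

lemma sub_tvar_pow_mult:
  "l \<noteq> p \<Longrightarrow> sub p l X = X \<Longrightarrow> sub p l (tvar l ^ s * X) = tvar l ^ s * X"
  by (simp add: sub_mult hom_power[OF hom_sub] sub_tvar_other)

lemma funpow_Aop_fixed:
  assumes "l \<noteq> p" "sub p l X = X"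
  shows "(Aop \<beta> \<alpha> l p ^^ k) X = tvar l ^ k * X"
proof (induction k)
  case (Suc k)
  have "dd l p (tvar l ^ k * X) = 0"
    by (rule dd_fixed) (use assms in \<open>simp_all add: sub_tvar_pow_mult\<close>)
  then show ?case using Suc by (simp add: Aop_def mult.assoc)
qed simp

lemma foldr_fixed:
  assumes "\<forall>p\<in>set ps. p \<noteq> l \<and> (f p \<noteq> 0 \<longrightarrow> sub p l G = G)"
  shows "List.foldr (\<lambda>p acc. (Aop \<beta> \<alpha> l p ^^ f p) acc) ps G = tvar l ^ sum_list (map f ps) * G"
  using assms
proof (induction ps)
  case (Cons p ps)
  then have IH: "List.foldr (\<lambda>p acc. (Aop \<beta> \<alpha> l p ^^ f p) acc) ps G = tvar l ^ sum_list (map f ps) * G" by auto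
  show ?case
  proof (cases "f p = 0")
    case True then show ?thesis using IH by simp
  next
    case False
    then have "sub p l G = G" "l \<noteq> p" using Cons.prems by auto
    then have "(Aop \<beta> \<alpha> l p ^^ f p) (tvar l ^ sum_list (map f ps) * G) = tvar l ^ f p * (tvar l ^ sum_list (map f ps) * G)"
      by (intro funpow_Aop_fixed) (simp_all add: sub_tvar_pow_mult)
    then show ?thesis using IH by (simp add: power_add mult.assoc)
  qed
qed simp

definition rowsum :: "nat \<Rightarrow> ((nat \<times> nat) \<Rightarrow>\<^sub>0 nat) \<Rightarrow> nat \<Rightarrow> nat" where
  "rowsum n m x = (\<Sum>p\<in>{Suc x..n}. Poly_Mapping.lookup m (x, p))"

definition Qp :: "nat \<Rightarrow> ((nat \<times> nat) \<Rightarrow>\<^sub>0 nat) \<Rightarrow> nat \<Rightarrow> 'a::comm_ring_1 tpoly" where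
  "Qp n m l = (\<Prod>x\<in>{l..n}. tvar x ^ rowsum n m x)"

lemma sub_prod: "sub b a (\<Prod>x\<in>S. g x) = (\<Prod>x\<in>S. sub b a (g x))"
  by (induction S rule: infinite_finite_induct) (simp_all add: sub_mult hom_one[OF hom_sub])

lemma V_pathless:
  assumes pl: "pathless_monomial n m"
  shows "1 \<le> l \<Longrightarrow> V \<beta> \<alpha> n l m = Qp n m l"
proof (induction "Suc n - l" arbitrary: l)
  case 0
  then show ?case by (simp add: V_gt Qp_def)
next
  case (Suc d)
  show ?case
  proof (cases "n < l")
    case True then show ?thesis by (simp add: V_gt Qp_def)
  next
    case False
    then have ln: "l \<le> n" by simp
    have IH: "V \<beta> \<alpha> n (Suc l) m = Qp n m (Suc l)" using Suc by auto
    have free: "sub p l (Qp n m (Suc l)) = (Qp n m (Suc l) :: 'a tpoly)"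
      if p: "p \<in> {Suc l..n}" and nz: "Poly_Mapping.lookup m (l, p) \<noteq> 0" for p
    proof -
      have "sub p l (tvar x ^ rowsum n m x) = (tvar x ^ rowsum n m x :: 'a tpoly)" if x: "x \<in> {Suc l..n}" for x
      proof (cases "x = p")
        case True
        have "rowsum n m p = 0"
        proof (rule ccontr)
          assume "rowsum n m p \<noteq> 0"
          then obtain y where y: "y \<in> {Suc p..n}" "Poly_Mapping.lookup m (p, y) \<noteq> 0"
            unfolding rowsum_def by (meson sum.not_neutral_contains_not_neutral)
          then show False using pl p nz Suc.prems unfolding pathless_monomial_def
            by (metis One_nat_def Suc_le_eq atLeastAtMost_iff less_one linorder_not_le)
        qed
        then show ?thesis using True by (simp add: hom_one[OF hom_sub])
      next
        case False
        then show ?thesis by (simp add: hom_power[OF hom_sub] sub_tvar_other)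
      qed
      then show ?thesis unfolding Qp_def by (simp add: sub_prod)
    qed
    have "V \<beta> \<alpha> n l m = Bl \<beta> \<alpha> n l m (Qp n m (Suc l))" using ln IH by (simp add: V_le)
    also have "\<dots> = tvar l ^ rowsum n m l * Qp n m (Suc l)"
    proof -
      have rs: "sum_list (map (\<lambda>p. Poly_Mapping.lookup m (l, p)) [Suc l..<Suc n]) = rowsum n m l"
        by (simp only: interv_sum_list_conv_sum_set_nat set_upt atLeastLessThanSuc_atLeastAtMost rowsum_def)
      show ?thesis unfolding Bl_def
        by (subst foldr_fixed) (use free rs in auto)
    qed
    also have "\<dots> = Qp n m l"
      unfolding Qp_def using ln by (simp add: prod.atLeast_Suc_atMost)
    finally show ?thesis .
  qed
qed

lemma Fm_pathless:
  assumes pl: "pathless_monomial n m"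
    and rng: "\<forall>v \<in> Poly_Mapping.keys m. 1 \<le> fst v \<and> fst v < snd v \<and> snd v \<le> n"
  shows "Fm \<beta> \<alpha> n m = (\<Prod>v \<in> Poly_Mapping.keys m. tvar (fst v) ^ Poly_Mapping.lookup m v)"
proof -
  let ?R = "Sigma {1..n} (\<lambda>x. {Suc x..n})"
  have sub: "Poly_Mapping.keys m \<subseteq> ?R" using rng by force
  have "(\<Prod>v \<in> Poly_Mapping.keys m. tvar (fst v) ^ Poly_Mapping.lookup m v)
      = (\<Prod>v \<in> ?R. (tvar (fst v) ^ Poly_Mapping.lookup m v :: 'a tpoly))"
    by (rule prod.mono_neutral_left) (use sub in \<open>auto simp: in_keys_iff\<close>)
  also have "\<dots> = (\<Prod>x\<in>{1..n}. \<Prod>p\<in>{Suc x..n}. tvar x ^ Poly_Mapping.lookup m (x, p))"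
    by (subst prod.Sigma) (auto simp: case_prod_beta)
  also have "\<dots> = Qp n m 1"
    by (simp add: Qp_def rowsum_def power_sum)
  also have "\<dots> = Fm \<beta> \<alpha> n m"
    by (simp add: Fm_def V_pathless[OF pl])
  finally show ?thesis by simp
qed


theorem lemma3p18:
  fixes \<beta> \<alpha> :: "'a::comm_ring_1" and n :: nat and p :: "'a xpoly"
  assumes "n > 0"
    and "p \<in> Xring n"
    and "pathless n p"
    and "p \<in> Jideal n \<beta> \<alpha>"
  shows "Dmap p = 0"
proof -
  have "Dmap p = lin (\<lambda>m. \<Prod>v \<in> Poly_Mapping.keys m. tvar (fst v) ^ Poly_Mapping.lookup m v) p"
    by (simp add: Dmap_def lin_def)
  also have "\<dots> = lin (Fm \<beta> \<alpha> n) p"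
  proof (rule lin_cong)
    fix m assume m: "m \<in> Poly_Mapping.keys p"
    have "pathless_monomial n m" using assms(3) m by (simp add: pathless_def)
    moreover have "\<forall>v \<in> Poly_Mapping.keys m. 1 \<le> fst v \<and> fst v < snd v \<and> snd v \<le> n"
      using assms(2) m by (simp add: Xring_def)
    ultimately show "(\<Prod>v \<in> Poly_Mapping.keys m. tvar (fst v) ^ Poly_Mapping.lookup m v) = Fm \<beta> \<alpha> n m"
      by (simp add: Fm_pathless)
  qed
  also have "\<dots> = Lx \<beta> \<alpha> n (1 * p)" by (simp add: Lx_def)
  also have "\<dots> = 0" by (rule Lx_Jideal[OF assms(4)])
  finally show ?thesis .
qed

end
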